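(* Let $(V,\eta)$ be a real vector space of dimension $n+2$, $n>1$, with symmetric bilinear form $\eta$ of signature $(+,-,\dots,-)$, $G=SO_0(\eta)$, $\mathfrak g=so(\eta)$. Fix $\mathbf s,\mathbf t\in V$ with $\eta(\mathbf s,\mathbf s)=-1$, $\eta(\mathbf t,\mathbf t)=1$, $\eta(\mathbf s,\mathbf t)=0$, $\mathbf f:=\mathbf t-\mathbf s$, $\mathfrak a:=\{Y\in\mathfrak g:Y\mathbf s=0\}$, $\mathfrak c:=\mathrm{span}\{\Lambda_{x\mathbf f}:x\in\mathbf s^\perp\}$, $A:=\{g\in G:g\mathbf s=\pm\mathbf s\}$, and $\mathfrak a^0\subset\mathfrak g^*$ the annihilator of $\mathfrak a$. Let $(\rho_\alpha)$ be an orthonormal basis of $\mathfrak a^0$ with respect to $\tilde k$, and assume elements $c_\alpha\in\mathfrak c$ satisfy $\tilde k(\psi,\mathrm{ad}^\#(a)\rho_\alpha)=\langle\psi,\mathrm{ad}(a)c_\alpha\rangle$ for all $\psi\in\mathfrak a^0$ and all $a\in A$. Then for every $\varphi\in\mathfrak a^0$, as functions on $\mathfrak a^0\times A$, $$\tilde k_\varphi=\sum_\alpha \mathrm{sgn}(\rho_\alpha)\,\tilde k_{\varphi\rho_\alpha}\,\widetilde{X^L_{c_\alpha}}.$$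
   Context: $\Lambda_{xy}(z)=\eta(y,z)x-\eta(x,z)y$ for $x,y,z\in V$. $k$ is the bilinear form on $\mathfrak g$ with $k(\Lambda_{xy},\Lambda_{zt})=\eta(x,t)\eta(y,z)-\eta(x,z)\eta(y,t)$, also viewed as the isomorphism $k:\mathfrak g\to\mathfrak g^*$, $\langle k(X),Y\rangle=k(X,Y)$; $\tilde k(\varphi,\psi):=k(k^{-1}\varphi,k^{-1}\psi)$ on $\mathfrak g^*$. The restriction of $\tilde k$ to $\mathfrak a^0$ is nondegenerate of Minkowski signature; an orthonormal basis $(\rho_\alpha)$ means $\tilde k(\rho_\alpha,\rho_\beta)=\tilde k(\rho_\alpha,\rho_\alpha)\delta_{\alpha\beta}$ with $|\tilde k(\rho_\alpha,\rho_\alpha)|=1$, and $\mathrm{sgn}(\rho_\alpha):=\tilde k(\rho_\alpha,\rho_\alpha)$. $\mathrm{ad}(g)X=gXg^{-1}$, $\mathrm{ad}^\#(g)=\mathrm{ad}(g^{-1})^*$. Functions on $\mathfrak a^0\times A$: $\tilde k_\varphi(\chi,a)=\tilde k(\varphi,\chi)$, $\tilde k_{\varphi\psi}(\chi,a)=\tilde k(\varphi,\mathrm{ad}^\#(a)\psi)$, and for $p\in\mathfrak c$, $\widetilde{X^L_p}(\chi,a)=\langle\chi,\mathrm{ad}(a)p\rangle$. *)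

theory Defs
  imports "HOL-Analysis.Analysis"
begin

type_synonym 'n mat = "real^'n^'n"
type_synonym 'n functional = "'n mat \<Rightarrow> real"

text \<open>V is modelled as real^'n; the symmetric bilinear form eta is given by a matrix E.\<close>

definition eta :: "'n::finite mat \<Rightarrow> real^'n \<Rightarrow> real^'n \<Rightarrow> real" where
  "eta E x y = x \<bullet> (E *v y)"

definition lorentz_form :: "'n::finite mat \<Rightarrow> bool" where
  "lorentz_form E \<longleftrightarrow> transpose E = E \<and>
     (\<exists>(P::real^'n^'n) i0. invertible P \<and>
        E = transpose P ** (\<chi> i j. if i = j then (if i = i0 then 1 else -1) else 0) ** P)"

definition Lam :: "'n::finite mat \<Rightarrow> real^'n \<Rightarrow> real^'n \<Rightarrow> 'n mat" where
  "Lam E x y = matrix (\<lambda>z. eta E y z *\<^sub>R x - eta E x z *\<^sub>R y)"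

definition so :: "'n::finite mat \<Rightarrow> 'n mat set" where
  "so E = {X. transpose X ** E + E ** X = 0}"

definition SO :: "'n::finite mat \<Rightarrow> 'n mat set" where
  "SO E = {g. transpose g ** E ** g = E \<and> det g = 1}"

definition SO0 :: "'n::finite mat \<Rightarrow> 'n mat set" where
  "SO0 E = connected_component_set (SO E) (mat 1)"

text \<open>The form k on g: k(X,Y) = tr(XY)/2, which is the bilinear form with
  k(Lam x y, Lam z t) = eta(x,t)eta(y,z) - eta(x,z)eta(y,t).\<close>
definition kform :: "'n::finite mat \<Rightarrow> 'n mat \<Rightarrow> real" where
  "kform X Y = trace (X ** Y) / 2"

text \<open>Dual space g^*: linear functionals on so(eta), extended by 0 outside so(eta).\<close>
definition gdual :: "'n::finite mat \<Rightarrow> 'n functional set" where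
  "gdual E = {\<phi>. (\<forall>X\<in>so E. \<forall>Y\<in>so E. \<phi> (X + Y) = \<phi> X + \<phi> Y) \<and>
                  (\<forall>c. \<forall>X\<in>so E. \<phi> (c *\<^sub>R X) = c * \<phi> X) \<and>
                  (\<forall>X. X \<notin> so E \<longrightarrow> \<phi> X = 0)}"

definition kinv :: "'n::finite mat \<Rightarrow> 'n functional \<Rightarrow> 'n mat" where
  "kinv E \<phi> = (THE X. X \<in> so E \<and> (\<forall>Y\<in>so E. kform X Y = \<phi> Y))"

definition ktilde :: "'n::finite mat \<Rightarrow> 'n functional \<Rightarrow> 'n functional \<Rightarrow> real" where
  "ktilde E \<phi> \<psi> = kform (kinv E \<phi>) (kinv E \<psi>)"

definition ad :: "'n::finite mat \<Rightarrow> 'n mat \<Rightarrow> 'n mat" where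
  "ad g X = g ** X ** matrix_inv g"

definition adsharp :: "'n::finite mat \<Rightarrow> 'n mat \<Rightarrow> 'n functional \<Rightarrow> 'n functional" where
  "adsharp E g \<phi> = (\<lambda>X. if X \<in> so E then \<phi> (ad (matrix_inv g) X) else 0)"

definition annihilator :: "'n::finite mat \<Rightarrow> 'n mat set \<Rightarrow> 'n functional set" where
  "annihilator E S = {\<phi> \<in> gdual E. \<forall>Y\<in>S. \<phi> Y = 0}"

definition alg_a :: "'n::finite mat \<Rightarrow> real^'n \<Rightarrow> 'n mat set" where
  "alg_a E s = {Y \<in> so E. Y *v s = 0}"

definition alg_c :: "'n::finite mat \<Rightarrow> real^'n \<Rightarrow> real^'n \<Rightarrow> 'n mat set" where
  "alg_c E s t = span {Lam E x (t - s) | x. eta E x s = 0}"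

definition groupA :: "'n::finite mat \<Rightarrow> real^'n \<Rightarrow> 'n mat set" where
  "groupA E s = {g \<in> SO0 E. g *v s = s \<or> g *v s = - s}"

definition ktilde_orthonormal_basis ::
  "'n::finite mat \<Rightarrow> 'n functional set \<Rightarrow> 'i set \<Rightarrow> ('i \<Rightarrow> 'n functional) \<Rightarrow> bool" where
  "ktilde_orthonormal_basis E S I \<rho> \<longleftrightarrow>
     finite I \<and> \<rho> ` I \<subseteq> S \<and>
     (\<forall>u. (\<forall>X. (\<Sum>\<alpha>\<in>I. u \<alpha> * \<rho> \<alpha> X) = 0) \<longrightarrow> (\<forall>\<alpha>\<in>I. u \<alpha> = 0)) \<and>
     (\<forall>\<phi>\<in>S. \<exists>u. \<forall>X. \<phi> X = (\<Sum>\<alpha>\<in>I. u \<alpha> * \<rho> \<alpha> X)) \<and>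
     (\<forall>\<alpha>\<in>I. \<forall>\<beta>\<in>I. \<alpha> \<noteq> \<beta> \<longrightarrow> ktilde E (\<rho> \<alpha>) (\<rho> \<beta>) = 0) \<and>
     (\<forall>\<alpha>\<in>I. \<bar>ktilde E (\<rho> \<alpha>) (\<rho> \<alpha>)\<bar> = 1)"

definition sgn_k :: "'n::finite mat \<Rightarrow> 'n functional \<Rightarrow> real" where
  "sgn_k E \<rho> = ktilde E \<rho> \<rho>"

definition kt_fun :: "'n::finite mat \<Rightarrow> 'n functional \<Rightarrow> 'n functional \<times> 'n mat \<Rightarrow> real" where
  "kt_fun E \<phi> = (\<lambda>(xi, a). ktilde E \<phi> xi)"

definition kt_fun2 :: "'n::finite mat \<Rightarrow> 'n functional \<Rightarrow> 'n functional \<Rightarrow> 'n functional \<times> 'n mat \<Rightarrow> real" where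
  "kt_fun2 E \<phi> \<psi> = (\<lambda>(xi, a). ktilde E \<phi> (adsharp E a \<psi>))"

definition XL_fun :: "'n::finite mat \<Rightarrow> 'n functional \<times> 'n mat \<Rightarrow> real" where
  "XL_fun p = (\<lambda>(xi, a). xi (ad a p))"

end

theory Submission imports Defs begin

lemma minv: fixes A :: "real^'n^'n" assumes "invertible A"
  shows "A ** matrix_inv A = mat 1" "matrix_inv A ** A = mat 1"
  using someI_ex[OF assms[unfolded invertible_def]] unfolding matrix_inv_def by auto

lemma mneg1: "(A::real^'n^'m) ** (- B :: real^'p^'n) = - (A ** B)"
  by (simp add: matrix_matrix_mult_def vec_eq_iff sum_negf)
lemma mneg2: "(- A::real^'n^'m) ** (B :: real^'p^'n) = - (A ** B)"
  by (simp add: matrix_matrix_mult_def vec_eq_iff sum_negf)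
lemma mradd: "((A::real^'n^'m) + B) ** (C :: real^'p^'n) = A ** C + B ** C"
  by (simp add: matrix_matrix_mult_def vec_eq_iff sum.distrib distrib_right)
lemma mldiff: "(A::real^'n^'m) ** ((B :: real^'p^'n) - C) = A ** B - A ** C"
  by (simp add: matrix_matrix_mult_def vec_eq_iff sum_subtractf right_diff_distrib)
lemma mrdiff: "((A::real^'n^'m) - B) ** (C :: real^'p^'n) = A ** C - B ** C"
  by (simp add: matrix_matrix_mult_def vec_eq_iff sum_subtractf left_diff_distrib)

lemma lorentz_props: assumes "lorentz_form (E::real^'n^'n)"
  shows "transpose E = E" "invertible E"
proof -
  show "transpose E = E" using assms unfolding lorentz_form_def by auto
  from assms obtain P :: "real^'n^'n" and i0 where P: "invertible P" and E: "E = transpose P ** (\<chi> i j. if i = j then (if i = i0 then 1 else -1) else 0) ** P"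
    unfolding lorentz_form_def by blast
  define d :: "'n \<Rightarrow> real" where "d i = (if i = i0 then 1 else -1)" for i
  define D :: "real^'n^'n" where "D = (\<chi> i j. if i = j then d i else 0)"
  have dd: "d i * d i = 1" for i unfolding d_def by auto
  have "(D ** D) $ i $ j = mat 1 $ i $ j" for i j
  proof -
    have "(D ** D) $ i $ j = (\<Sum>k\<in>UNIV. (if i = k then d i else 0) * (if k = j then d k else 0))"
      unfolding matrix_matrix_mult_def D_def by (simp only: vec_lambda_beta)
    also have "\<dots> = (\<Sum>k\<in>UNIV. (if k = i then d i * (if k = j then d k else 0) else 0))"
      by (rule sum.cong) auto
    also have "\<dots> = (if i = j then 1 else 0)" by (simp add: sum.delta dd)
    finally show ?thesis by (simp add: mat_def)
  qed
  hence "D ** D = mat 1" by (simp add: vec_eq_iff)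
  hence "invertible D" unfolding invertible_def by blast
  thus "invertible E" using E P unfolding D_def d_def[abs_def]
    by (simp add: invertible_mult transpose_invertible)
qed

lemma trace_inner: "trace ((M::real^'n^'n) ** transpose M) = M \<bullet> M"
  by (simp add: trace_def matrix_matrix_mult_def transpose_def inner_vec_def)

lemma nondeg:
  fixes E X :: "real^'n^'n"
  assumes sym: "transpose E = E" and inv: "invertible E"
    and X: "X \<in> so E" and all: "\<forall>Y\<in>so E. trace (X ** Y) = 0"
  shows "X = 0"
proof -
  define Ei where "Ei = matrix_inv E"
  have EEi: "E ** Ei = mat 1" "Ei ** E = mat 1" using minv[OF inv] Ei_def by auto
  have tEi: "transpose Ei = Ei"
  proof -
    have "transpose Ei ** E = mat 1" using EEi(1) sym
      by (metis matrix_transpose_mul transpose_mat)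
    hence "transpose Ei ** E ** Ei = Ei" by (metis matrix_mul_lid)
    thus ?thesis by (metis EEi(1) matrix_mul_assoc matrix_mul_rid)
  qed
  have XE: "transpose X ** E = - (E ** X)" using X unfolding so_def by (simp add: eq_neg_iff_add_eq_0)
  have key: "Ei ** transpose X = - (X ** Ei)"
  proof -
    have "Ei ** transpose X = Ei ** (transpose X ** E) ** Ei"
      by (metis EEi(1) matrix_mul_assoc matrix_mul_rid)
    also have "\<dots> = Ei ** (-(E ** X)) ** Ei" using XE by simp
    also have "\<dots> = - (X ** Ei)"
      by (metis EEi(2) matrix_mul_assoc matrix_mul_lid mneg1 mneg2)
    finally show ?thesis .
  qed
  define M where "M = X ** Ei"
  define Y where "Y = Ei ** Ei ** transpose X"
  have "transpose Y ** E + E ** Y = 0"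
  proof -
    have "transpose Y = X ** Ei ** Ei" unfolding Y_def
      by (simp add: matrix_transpose_mul tEi matrix_mul_assoc)
    hence "transpose Y ** E = X ** Ei" by (metis EEi(2) matrix_mul_assoc matrix_mul_rid)
    moreover have "E ** Y = Ei ** transpose X" unfolding Y_def
      by (metis EEi(1) matrix_mul_assoc matrix_mul_lid)
    ultimately show ?thesis using key by simp
  qed
  hence "Y \<in> so E" unfolding so_def by simp
  hence "trace (X ** Y) = 0" using all by auto
  moreover have "X ** Y = M ** transpose M" unfolding M_def Y_def
    by (simp add: matrix_transpose_mul tEi matrix_mul_assoc)
  ultimately have "M = 0" by (metis trace_inner inner_eq_zero_iff)
  hence "M ** E = 0" by simp
  thus "X = 0" unfolding M_def by (metis EEi(2) matrix_mul_assoc matrix_mul_rid)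
qed

lemma transpose_add': "transpose ((A::real^'n^'n) + B) = transpose A + transpose B"
  by (simp add: transpose_def vec_eq_iff)
lemma transpose_minus': "transpose (- (A::real^'n^'n)) = - transpose A"
  by (simp add: transpose_def vec_eq_iff)
lemma trace_scale: "trace (c *\<^sub>R (A::real^'n^'n)) = c * trace A"
  by (simp add: trace_def sum_distrib_left)
lemma trace_neg: "trace (- (A::real^'n^'n)) = - trace A"
  by (simp add: trace_def sum_negf)

lemma transpose_zero': "transpose (0::real^'n^'n) = 0"
  by (simp add: transpose_def vec_eq_iff)
lemma subspace_so: "subspace (so (E::real^'n^'n))"
  unfolding subspace_def so_def
proof (intro conjI ballI allI; simp)
  show "transpose 0 ** E = 0" by (simp add: transpose_def matrix_matrix_mult_def vec_eq_iff)
  fix x y assume x: "transpose x ** E + E ** x = 0" and y: "transpose y ** E + E ** y = 0"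
  have "transpose (x + y) ** E + E ** (x + y) = (transpose x ** E + E ** x) + (transpose y ** E + E ** y)"
    by (simp add: transpose_add' mradd matrix_add_ldistrib)
  thus "transpose (x + y) ** E + E ** (x + y) = 0" using x y by simp
next
  fix c x assume x: "transpose x ** E + E ** x = 0"
  have "transpose (c *\<^sub>R x) ** E + E ** (c *\<^sub>R x) = c *\<^sub>R (transpose x ** E + E ** x)"
    by (simp add: transpose_scalar matrix_scalar_ac scalar_matrix_assoc[symmetric] scaleR_add_right)
  thus "transpose (c *\<^sub>R x) ** E + E ** (c *\<^sub>R x) = 0" using x by simp
qed

lemma gdual_sum:
  assumes "\<phi> \<in> gdual E" "finite B" "\<And>b. b \<in> B \<Longrightarrow> f b \<in> so E"
  shows "\<phi> (\<Sum>b\<in>B. f b) = (\<Sum>b\<in>B. \<phi> (f b))"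
  using assms(2,3)
proof (induction B rule: finite_induct)
  case empty
  have "\<phi> (0 *\<^sub>R 0) = 0 * \<phi> 0" using assms(1) subspace_so[of E] unfolding gdual_def subspace_def by blast
  thus ?case by simp
next
  case (insert x F)
  have "sum f F \<in> so E" using insert subspace_sum[OF subspace_so] by blast
  thus ?case using insert assms(1) unfolding gdual_def by auto
qed

lemma trace_lin1: "linear (\<lambda>Y. trace ((X::real^'n^'n) ** Y))"
  by (rule linearI) (simp_all add: matrix_add_ldistrib trace_add matrix_scalar_ac scalar_matrix_assoc[symmetric] trace_scale)

lemma trace_zero: "trace (0::real^'n^'n) = 0" by (simp add: trace_def)

lemma subspace_tr0: "subspace {Y. trace ((Z::real^'n^'n) ** Y) = 0}"
  unfolding subspace_def
  by (auto simp: matrix_add_ldistrib trace_add matrix_scalar_ac scalar_matrix_assoc[symmetric] trace_scale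
      trace_zero)

lemma kinv_ex:
  fixes E :: "real^'n^'n"
  assumes sym: "transpose E = E" and inv: "invertible E" and phi: "\<phi> \<in> gdual E"
  shows "\<exists>X\<in>so E. \<forall>Y\<in>so E. trace (X ** Y) = \<phi> Y"
proof -
  define S where "S = so E"
  have sub: "subspace S" unfolding S_def by (rule subspace_so)
  obtain B where B: "B \<subseteq> S" "independent B" "S \<subseteq> span B" "card B = dim S"
    by (rule basis_exists[of S])
  have finB: "finite B" using B(2) finiteI_independent by blast
  have spanB: "span B = S" using B span_minimal[OF B(1) sub] by blast
  define F where "F X = (\<Sum>b\<in>B. trace (X ** b) *\<^sub>R b)" for X :: "real^'n^'n"
  have linF: "linear F"
  proof (rule linearI)
    fix x y show "F (x + y) = F x + F y" unfolding F_def
      by (simp add: mradd trace_add scaleR_add_left sum.distrib)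
  next
    fix c x show "F (c *\<^sub>R x) = c *\<^sub>R F x" unfolding F_def
      by (simp add: scalar_matrix_assoc[symmetric] trace_scale scaleR_sum_right)
  qed
  have FS: "F X \<in> S" for X unfolding F_def spanB[symmetric] using B(1)
    by (intro span_sum span_scale span_base) auto
  have indep: "\<forall>c. (\<Sum>v\<in>B. c v *\<^sub>R v) = 0 \<longrightarrow> (\<forall>v\<in>B. c v = 0)"
    using B(2) independent_explicit by blast
  have inj: "inj_on F S"
  proof (rule inj_onI)
    fix X X' assume X: "X \<in> S" "X' \<in> S" "F X = F X'"
    define Z where "Z = X - X'"
    have "F Z = 0" unfolding Z_def using X(3) linear_diff[OF linF] by simp
    hence "(\<Sum>b\<in>B. trace (Z ** b) *\<^sub>R b) = 0" unfolding F_def .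
    hence zb: "\<forall>b\<in>B. trace (Z ** b) = 0" using indep[rule_format, of "\<lambda>b. trace (Z ** b)"] by blast
    have "\<forall>Y\<in>so E. trace (Z ** Y) = 0"
    proof
      fix Y assume "Y \<in> so E"
      hence "Y \<in> span B" using spanB S_def by simp
      thus "trace (Z ** Y) = 0"
        by (rule span_induct) (use zb subspace_tr0 in auto)
    qed
    moreover have "Z \<in> so E" unfolding Z_def using X sub S_def by (simp add: subspace_diff)
    ultimately have "Z = 0" using nondeg[OF sym inv] by blast
    thus "X = X'" unfolding Z_def by simp
  qed
  have FSS: "F ` S \<subseteq> S" using FS by blast
  have spS: "span S = S" using sub by simp
  have "dim (F ` S) = dim S" using dim_image_eq[OF linF, of S] inj spS by simp
  hence "span (F ` S) = span S" using dim_eq_span[OF FSS] by simp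
  hence FSeq: "F ` S = S" using span_linear_image[OF linF, of S] spS by simp
  define T where "T = (\<Sum>b\<in>B. \<phi> b *\<^sub>R b)"
  have "T \<in> S" unfolding T_def spanB[symmetric] using B(1)
    by (intro span_sum span_scale span_base) auto
  then obtain X where X: "X \<in> S" "F X = T" using FSeq by force
  have "(\<Sum>b\<in>B. (trace (X ** b) - \<phi> b) *\<^sub>R b) = 0"
    using X(2) unfolding F_def T_def by (simp add: scaleR_diff_left sum_subtractf)
  hence xb: "\<forall>b\<in>B. trace (X ** b) = \<phi> b" using indep[rule_format, of "\<lambda>b. trace (X ** b) - \<phi> b"] by simp
  have "\<forall>Y\<in>so E. trace (X ** Y) = \<phi> Y"
  proof
    fix Y assume "Y \<in> so E"
    hence Y: "Y \<in> span B" using spanB S_def by simp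
    have "subspace {Y. Y \<in> S \<and> trace (X ** Y) = \<phi> Y}"
      unfolding subspace_def
    proof (intro conjI ballI allI)
      have "\<phi> (0 *\<^sub>R 0) = 0 * \<phi> 0" using phi sub unfolding gdual_def subspace_def S_def by blast
      thus "0 \<in> {Y. Y \<in> S \<and> trace (X ** Y) = \<phi> Y}" using sub by (simp add: trace_zero subspace_0)
    next
      fix x y assume "x \<in> {Y. Y \<in> S \<and> trace (X ** Y) = \<phi> Y}" "y \<in> {Y. Y \<in> S \<and> trace (X ** Y) = \<phi> Y}"
      thus "x + y \<in> {Y. Y \<in> S \<and> trace (X ** Y) = \<phi> Y}" using phi sub
        unfolding gdual_def S_def by (simp add: matrix_add_ldistrib trace_add subspace_add)
    next
      fix c x assume "x \<in> {Y. Y \<in> S \<and> trace (X ** Y) = \<phi> Y}"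
      thus "c *\<^sub>R x \<in> {Y. Y \<in> S \<and> trace (X ** Y) = \<phi> Y}" using phi sub
        unfolding gdual_def S_def
        by (simp add: matrix_scalar_ac scalar_matrix_assoc[symmetric] trace_scale subspace_scale)
    qed
    hence "Y \<in> S \<and> trace (X ** Y) = \<phi> Y"
      by (rule span_induct[OF Y, where P="\<lambda>Y. Y \<in> S \<and> trace (X ** Y) = \<phi> Y"])
        (use B(1) xb in auto)
    thus "trace (X ** Y) = \<phi> Y" by simp
  qed
  thus ?thesis using X(1) S_def by blast
qed


lemma kinv_prop:
  fixes E :: "real^'n^'n"
  assumes form: "lorentz_form E" and phi: "\<phi> \<in> gdual E"
  shows "kinv E \<phi> \<in> so E \<and> (\<forall>Y\<in>so E. kform (kinv E \<phi>) Y = \<phi> Y)"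
proof -
  have sym: "transpose E = E" and inv: "invertible E" using lorentz_props[OF form] by auto
  obtain X where X: "X \<in> so E" "\<forall>Y\<in>so E. trace (X ** Y) = \<phi> Y" using kinv_ex[OF sym inv phi] by blast
  let ?P = "\<lambda>Z. Z \<in> so E \<and> (\<forall>Y\<in>so E. kform Z Y = \<phi> Y)"
  have ex: "?P (2 *\<^sub>R X)" using X subspace_so[of E]
    by (auto simp: kform_def scalar_matrix_assoc[symmetric] trace_scale subspace_scale)
  have uniq: "Z = 2 *\<^sub>R X" if "?P Z" for Z
  proof -
    have "\<forall>Y\<in>so E. trace ((Z - 2 *\<^sub>R X) ** Y) = 0"
      using that ex by (auto simp: mrdiff trace_sub kform_def)
    moreover have "Z - 2 *\<^sub>R X \<in> so E" using that ex subspace_so[of E] by (simp add: subspace_diff)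
    ultimately show ?thesis using nondeg[OF sym inv] by fastforce
  qed
  have "?P (THE Z. ?P Z)" by (rule theI[of ?P, OF ex uniq])
  thus ?thesis unfolding kinv_def .
qed

lemma kform_sym: "kform X Y = kform Y X"
  unfolding kform_def by (subst trace_mul_sym) (rule refl)

lemma ktilde_eval:
  assumes form: "lorentz_form E" and "\<phi> \<in> gdual E" "xi \<in> gdual E"
  shows "ktilde E \<phi> xi = xi (kinv E \<phi>)"
proof -
  have "kinv E \<phi> \<in> so E" using kinv_prop[OF form assms(2)] by blast
  hence "kform (kinv E xi) (kinv E \<phi>) = xi (kinv E \<phi>)" using kinv_prop[OF form assms(3)] by blast
  moreover have "ktilde E \<phi> xi = kform (kinv E xi) (kinv E \<phi>)" unfolding ktilde_def by (rule kform_sym)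
  ultimately show ?thesis by simp
qed

lemma ktilde_sym:
  assumes form: "lorentz_form E" and "\<phi> \<in> gdual E" "xi \<in> gdual E"
  shows "ktilde E \<phi> xi = ktilde E xi \<phi>"
  unfolding ktilde_def by (rule kform_sym)

lemma ad_add: "ad g (X + Y) = ad g X + ad g Y"
  unfolding ad_def by (simp add: matrix_add_ldistrib mradd)
lemma ad_scale: "ad g (c *\<^sub>R X) = c *\<^sub>R ad g X"
  unfolding ad_def by (simp add: matrix_scalar_ac scalar_matrix_assoc[symmetric])

lemma ad_so:
  fixes g E X :: "real^'n^'n"
  assumes inv: "invertible g" and gE: "transpose g ** E ** g = E" and X: "X \<in> so E"
  shows "ad g X \<in> so E"
proof -
  define gi where "gi = matrix_inv g"
  have g1: "g ** gi = mat 1" "gi ** g = mat 1" using minv[OF inv] gi_def by auto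
  define git where "git = transpose gi"
  have git: "git ** transpose g = mat 1" unfolding git_def using g1(1)
    by (metis matrix_transpose_mul transpose_mat)
  have Eg: "E ** g = git ** E"
    by (metis gE git matrix_mul_assoc matrix_mul_lid)
  have gtE: "transpose g ** E = E ** gi"
    by (metis gE g1(1) matrix_mul_assoc matrix_mul_rid)
  have XE: "transpose X ** E + E ** X = 0" using X unfolding so_def by simp
  have "transpose (ad g X) ** E + E ** ad g X = git ** (transpose X ** E + E ** X) ** gi"
  proof -
    have "transpose (ad g X) = git ** transpose X ** transpose g"
      unfolding ad_def git_def gi_def by (simp add: matrix_transpose_mul matrix_mul_assoc)
    hence 1: "transpose (ad g X) ** E = git ** transpose X ** E ** gi"
      using gtE by (simp add: matrix_mul_assoc[symmetric])
    have 2: "E ** ad g X = git ** E ** X ** gi"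
      unfolding ad_def gi_def[symmetric] using Eg by (simp add: matrix_mul_assoc)
    show ?thesis using 1 2 by (simp add: matrix_add_ldistrib mradd matrix_mul_assoc)
  qed
  thus ?thesis using XE unfolding so_def by simp
qed

lemma SO_facts:
  fixes g E :: "real^'n^'n"
  assumes "g \<in> SO E"
  shows "invertible g" "transpose g ** E ** g = E"
    "invertible (matrix_inv g)" "transpose (matrix_inv g) ** E ** matrix_inv g = E"
    "matrix_inv (matrix_inv g) = g"
proof -
  show inv: "invertible g" using assms unfolding SO_def by (simp add: invertible_det_nz)
  show gE: "transpose g ** E ** g = E" using assms unfolding SO_def by simp
  define gi where "gi = matrix_inv g"
  have g1: "g ** gi = mat 1" "gi ** g = mat 1" using minv[OF inv] gi_def by auto
  show "invertible (matrix_inv g)" unfolding gi_def[symmetric] invertible_def using g1 by blast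
  hence gii: "gi ** matrix_inv gi = mat 1" using minv gi_def by auto
  have "matrix_inv gi = (g ** gi) ** matrix_inv gi" using g1 by simp
  also have "\<dots> = g ** (gi ** matrix_inv gi)" by (simp add: matrix_mul_assoc)
  also have "\<dots> = g" using gii by simp
  finally show "matrix_inv (matrix_inv g) = g" unfolding gi_def .
  have tt: "transpose gi ** transpose g = mat 1" using g1(1) matrix_transpose_mul[of g gi] by simp
  have "transpose gi ** (transpose g ** E ** g) ** gi = (transpose gi ** transpose g) ** E ** (g ** gi)"
    by (simp add: matrix_mul_assoc)
  hence "transpose gi ** (transpose g ** E ** g) ** gi = E" using tt g1 by simp
  thus "transpose (matrix_inv g) ** E ** matrix_inv g = E" using gE gi_def by simp
qed

lemma ad_inv_cancel:
  fixes g X :: "real^'n^'n"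
  assumes "invertible g"
  shows "ad g (ad (matrix_inv g) X) = X"
proof -
  have "invertible (matrix_inv g)" using minv[OF assms] invertible_def by blast
  hence gii: "matrix_inv g ** matrix_inv (matrix_inv g) = mat 1" using minv by blast
  have "matrix_inv (matrix_inv g) = (g ** matrix_inv g) ** matrix_inv (matrix_inv g)" using minv[OF assms] by simp
  also have "\<dots> = g ** (matrix_inv g ** matrix_inv (matrix_inv g))" by (simp add: matrix_mul_assoc)
  also have "\<dots> = g" using gii by simp
  finally have gg: "matrix_inv (matrix_inv g) = g" .
  have "ad g (ad (matrix_inv g) X) = (g ** matrix_inv g) ** X ** (g ** matrix_inv g)"
    unfolding ad_def gg by (simp add: matrix_mul_assoc)
  thus ?thesis using minv[OF assms] by simp
qed

lemma adsharp_gdual: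
  fixes g E :: "real^'n^'n"
  assumes g: "g \<in> SO E" and psi: "\<psi> \<in> gdual E"
  shows "adsharp E g \<psi> \<in> gdual E"
proof -
  have adso: "ad (matrix_inv g) X \<in> so E" if "X \<in> so E" for X
    using ad_so[OF SO_facts(3,4)[OF g] that] .
  have p1: "\<psi> (X + Y) = \<psi> X + \<psi> Y" "\<psi> (c *\<^sub>R X) = c * \<psi> X"
    if "X \<in> so E" "Y \<in> so E" for X Y c using psi that unfolding gdual_def by auto
  have sub: "subspace (so E)" by (rule subspace_so)
  show ?thesis unfolding gdual_def adsharp_def
  proof (intro CollectI conjI ballI allI impI)
    fix X Y assume XY: "X \<in> so E" "Y \<in> so E"
    hence "X + Y \<in> so E" using sub by (simp add: subspace_add)
    thus "(if X + Y \<in> so E then \<psi> (ad (matrix_inv g) (X + Y)) else 0) =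
        (if X \<in> so E then \<psi> (ad (matrix_inv g) X) else 0) + (if Y \<in> so E then \<psi> (ad (matrix_inv g) Y) else 0)"
      using XY by (simp add: ad_add p1 adso)
  next
    fix c X assume X: "X \<in> so E"
    hence "c *\<^sub>R X \<in> so E" using sub by (simp add: subspace_scale)
    thus "(if c *\<^sub>R X \<in> so E then \<psi> (ad (matrix_inv g) (c *\<^sub>R X)) else 0) =
        c * (if X \<in> so E then \<psi> (ad (matrix_inv g) X) else 0)"
      using X by (simp add: ad_scale p1(2)[OF adso] adso)
  next
    fix X :: "real^'n^'n" assume "X \<notin> so E"
    thus "(if X \<in> so E then \<psi> (ad (matrix_inv g) X) else 0) = 0" by simp
  qed
qed

lemma Lam_entry: "Lam E x y $ i $ j = (\<Sum>k\<in>UNIV. y$k * E$k$j) * x$i - (\<Sum>k\<in>UNIV. x$k * E$k$j) * y$i"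
  unfolding Lam_def matrix_def eta_def
  by (simp add: matrix_vector_mult_basis column_def inner_vec_def)

lemma Lam_so:
  fixes E :: "real^'n^'n"
  assumes sym: "transpose E = E"
  shows "Lam E x y \<in> so E"
proof -
  have s: "E$k$j = E$j$k" for k j using sym unfolding transpose_def by (metis vec_lambda_beta)
  define Y where "Y j = (\<Sum>k\<in>UNIV. y$k * E$k$j)" for j
  define X where "X j = (\<Sum>k\<in>UNIV. x$k * E$k$j)" for j
  have L: "Lam E x y $ i $ j = Y j * x$i - X j * y$i" for i j unfolding X_def Y_def by (rule Lam_entry)
  have "(transpose (Lam E x y) ** E + E ** Lam E x y) $ i $ j = 0" for i j
  proof -
    have 1: "(transpose (Lam E x y) ** E) $ i $ j = (\<Sum>k\<in>UNIV. (Y i * x$k - X i * y$k) * E$k$j)"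
      by (simp add: matrix_matrix_mult_def transpose_def L)
    also have "\<dots> = Y i * X j - X i * Y j"
      unfolding X_def Y_def
      by (simp add: left_diff_distrib sum_subtractf sum_distrib_left mult.assoc)
    finally have 1: "(transpose (Lam E x y) ** E) $ i $ j = Y i * X j - X i * Y j" .
    have "(E ** Lam E x y) $ i $ j = (\<Sum>k\<in>UNIV. E$i$k * (Y j * x$k - X j * y$k))"
      by (simp add: matrix_matrix_mult_def L)
    also have "\<dots> = (\<Sum>k\<in>UNIV. (Y j * x$k - X j * y$k) * E$k$i)"
      by (rule sum.cong) (auto simp: s[of i] mult.commute)
    also have "\<dots> = Y j * X i - X j * Y i"
      unfolding X_def Y_def
      by (simp add: left_diff_distrib sum_subtractf sum_distrib_left mult.assoc)
    finally have 2: "(E ** Lam E x y) $ i $ j = Y j * X i - X j * Y i" .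
    show ?thesis using 1 2 by simp
  qed
  thus ?thesis unfolding so_def by (simp add: vec_eq_iff)
qed


lemma alg_c_so: "transpose E = E \<Longrightarrow> alg_c E s t \<subseteq> so E"
  unfolding alg_c_def by (rule span_minimal) (auto simp: Lam_so subspace_so)

lemma groupA_SO: "a \<in> groupA E s \<Longrightarrow> a \<in> SO E"
  unfolding groupA_def SO0_def using connected_component_subset by blast

lemma one_groupA: "mat 1 \<in> groupA E s"
proof -
  have "mat 1 \<in> SO E" unfolding SO_def by (simp add: det_I)
  thus ?thesis unfolding groupA_def SO0_def by (simp add: connected_component_refl)
qed

lemma minv_one: "matrix_inv (mat 1 :: real^'n^'n) = mat 1"
proof -
  have "invertible (mat 1 :: real^'n^'n)" unfolding invertible_def by (rule exI[of _ "mat 1"]) simp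
  from minv(1)[OF this] show ?thesis by simp
qed

lemma ad_one: "ad (mat 1) X = (X :: real^'n^'n)"
  unfolding ad_def minv_one by simp

lemma adsharp_one: "\<rho> \<in> gdual E \<Longrightarrow> adsharp E (mat 1) \<rho> = \<rho>"
  unfolding adsharp_def minv_one ad_one gdual_def by (rule ext) auto

lemma mv_neg: "(A::real^'n^'m) *v (- v) = - (A *v v)"
  by (simp add: matrix_vector_mult_def vec_eq_iff sum_negf)

lemma prime_in:
  fixes E a :: "real^'n^'n"
  assumes a: "a \<in> groupA E s" and psi: "\<psi> \<in> annihilator E (alg_a E s)"
  shows "(\<lambda>X. if X \<in> so E then \<psi> (ad a X) else 0) \<in> annihilator E (alg_a E s)"
proof -
  have aSO: "a \<in> SO E" using groupA_SO[OF a] .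
  note aF = SO_facts[OF aSO]
  have eq: "(\<lambda>X. if X \<in> so E then \<psi> (ad a X) else 0) = adsharp E (matrix_inv a) \<psi>"
    unfolding adsharp_def aF(5) ..
  have gd: "\<psi> \<in> gdual E" using psi unfolding annihilator_def by auto
  have "matrix_inv a \<in> SO E"
  proof -
    have "det a * det (matrix_inv a) = 1" using minv(1)[OF aF(1)] by (metis det_mul det_I)
    moreover have "det a = 1" using aSO unfolding SO_def by simp
    ultimately show ?thesis using aF(4) unfolding SO_def by simp
  qed
  hence g1: "(\<lambda>X. if X \<in> so E then \<psi> (ad a X) else 0) \<in> gdual E"
    unfolding eq by (rule adsharp_gdual[OF _ gd])
  have "\<psi> (ad a Y) = 0" if Y: "Y \<in> alg_a E s" for Y
  proof -
    have Yso: "Y \<in> so E" and Ys: "Y *v s = 0" using Y unfolding alg_a_def by auto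
    have "a *v s = s \<or> a *v s = - s" using a unfolding groupA_def by auto
    hence "matrix_inv a *v s = s \<or> matrix_inv a *v s = - s"
    proof
      assume "a *v s = s"
      hence "matrix_inv a *v (a *v s) = matrix_inv a *v s" by simp
      thus ?thesis using minv(2)[OF aF(1)] by (simp add: matrix_vector_mul_assoc)
    next
      assume h: "a *v s = - s"
      have "matrix_inv a *v (a *v s) = s" using minv(2)[OF aF(1)] by (simp add: matrix_vector_mul_assoc)
      hence "matrix_inv a *v (- s) = s" using h by simp
      hence "- (matrix_inv a *v s) = s" by (simp add: mv_neg)
      hence "matrix_inv a *v s = - s" by (metis minus_minus)
      thus ?thesis by simp
    qed
    hence "Y *v (matrix_inv a *v s) = 0" using Ys by (auto simp: mv_neg)
    hence "ad a Y *v s = 0" unfolding ad_def by (simp add: matrix_vector_mul_assoc[symmetric])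
    moreover have "ad a Y \<in> so E" using ad_so[OF aF(1,2) Yso] .
    ultimately have "ad a Y \<in> alg_a E s" unfolding alg_a_def by simp
    thus ?thesis using psi unfolding annihilator_def by auto
  qed
  thus ?thesis using g1 unfolding annihilator_def alg_a_def by auto
qed


theorem lemma2p1:
  fixes E :: "real^'n^'n" and s t :: "real^'n"
    and I :: "'i set" and \<rho> :: "'i \<Rightarrow> ('n mat \<Rightarrow> real)" and c :: "'i \<Rightarrow> real^'n^'n"
  assumes dim: "CARD('n) \<ge> 4"
    and form: "lorentz_form E"
    and ss: "eta E s s = -1" and tt: "eta E t t = 1" and st: "eta E s t = 0"
    and onb: "ktilde_orthonormal_basis E (annihilator E (alg_a E s)) I \<rho>"
    and c_in: "\<forall>\<alpha>\<in>I. c \<alpha> \<in> alg_c E s t"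
    and c_prop: "\<forall>\<alpha>\<in>I. \<forall>\<psi>\<in>annihilator E (alg_a E s). \<forall>a\<in>groupA E s.
                   ktilde E \<psi> (adsharp E a (\<rho> \<alpha>)) = \<psi> (ad a (c \<alpha>))"
  shows "\<forall>\<phi>\<in>annihilator E (alg_a E s). \<forall>p\<in>annihilator E (alg_a E s) \<times> groupA E s.
           kt_fun E \<phi> p = (\<Sum>\<alpha>\<in>I. sgn_k E (\<rho> \<alpha>) * kt_fun2 E \<phi> (\<rho> \<alpha>) p * XL_fun (c \<alpha>) p)"
proof (intro ballI)
  let ?A0 = "annihilator E (alg_a E s)"
  fix \<phi> p assume phi: "\<phi> \<in> ?A0" and p: "p \<in> ?A0 \<times> groupA E s"
  obtain xi a where pe: "p = (xi, a)" and xi: "xi \<in> ?A0" and a: "a \<in> groupA E s" using p by auto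
  have A0g: "\<And>\<psi>. \<psi> \<in> ?A0 \<Longrightarrow> \<psi> \<in> gdual E" unfolding annihilator_def by auto
  have sym: "transpose E = E" using lorentz_props[OF form] by simp
  have aSO: "a \<in> SO E" using groupA_SO[OF a] .
  note aF = SO_facts[OF aSO]
  have finI: "finite I" and rho: "\<And>\<alpha>. \<alpha> \<in> I \<Longrightarrow> \<rho> \<alpha> \<in> ?A0"
    using onb unfolding ktilde_orthonormal_basis_def by auto
  have orth: "\<And>\<alpha> \<beta>. \<alpha> \<in> I \<Longrightarrow> \<beta> \<in> I \<Longrightarrow> \<alpha> \<noteq> \<beta> \<Longrightarrow> ktilde E (\<rho> \<alpha>) (\<rho> \<beta>) = 0"
    using onb unfolding ktilde_orthonormal_basis_def by auto
  have sq: "ktilde E (\<rho> \<alpha>) (\<rho> \<alpha>) * ktilde E (\<rho> \<alpha>) (\<rho> \<alpha>) = 1" if "\<alpha> \<in> I" for \<alpha>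
  proof -
    have "\<bar>ktilde E (\<rho> \<alpha>) (\<rho> \<alpha>)\<bar> = 1" using onb that unfolding ktilde_orthonormal_basis_def by auto
    thus ?thesis by (metis abs_mult_self_eq mult_1)
  qed
  have cso: "\<And>\<alpha>. \<alpha> \<in> I \<Longrightarrow> c \<alpha> \<in> so E" using c_in alg_c_so[OF sym] by blast
  have c_one: "ktilde E \<psi> (\<rho> \<alpha>) = \<psi> (c \<alpha>)" if "\<alpha> \<in> I" "\<psi> \<in> ?A0" for \<alpha> \<psi>
    using c_prop that one_groupA[of E s] adsharp_one[OF A0g[OF rho[OF that(1)]]] ad_one[of "c \<alpha>"]
    by metis
  define xi' where "xi' = (\<lambda>X. if X \<in> so E then xi (ad a X) else 0)"
  have xi'A0: "xi' \<in> ?A0" unfolding xi'_def by (rule prime_in[OF a xi])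
  obtain v where v: "\<forall>X. xi' X = (\<Sum>\<beta>\<in>I. v \<beta> * \<rho> \<beta> X)"
    using onb xi'A0 unfolding ktilde_orthonormal_basis_def by blast
  have coef: "ktilde E (\<rho> \<alpha>) xi' = v \<alpha> * ktilde E (\<rho> \<alpha>) (\<rho> \<alpha>)" if al: "\<alpha> \<in> I" for \<alpha>
  proof -
    have "ktilde E (\<rho> \<alpha>) xi' = xi' (kinv E (\<rho> \<alpha>))"
      by (rule ktilde_eval[OF form A0g[OF rho[OF al]] A0g[OF xi'A0]])
    also have "\<dots> = (\<Sum>\<beta>\<in>I. v \<beta> * \<rho> \<beta> (kinv E (\<rho> \<alpha>)))" using v by simp
    also have "\<dots> = (\<Sum>\<beta>\<in>I. v \<beta> * ktilde E (\<rho> \<alpha>) (\<rho> \<beta>))"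
      by (rule sum.cong[OF refl]) (simp add: ktilde_eval[OF form A0g[OF rho[OF al]] A0g[OF rho]])
    also have "\<dots> = (\<Sum>\<beta>\<in>I. if \<beta> = \<alpha> then v \<alpha> * ktilde E (\<rho> \<alpha>) (\<rho> \<alpha>) else 0)"
      by (rule sum.cong[OF refl]) (use orth al in auto)
    also have "\<dots> = v \<alpha> * ktilde E (\<rho> \<alpha>) (\<rho> \<alpha>)" using finI al by (simp add: sum.delta)
    finally show ?thesis .
  qed
  have t2: "xi (ad a (c \<alpha>)) = v \<alpha> * ktilde E (\<rho> \<alpha>) (\<rho> \<alpha>)" if al: "\<alpha> \<in> I" for \<alpha>
  proof -
    have "xi (ad a (c \<alpha>)) = xi' (c \<alpha>)" unfolding xi'_def using cso[OF al] by simp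
    also have "\<dots> = ktilde E xi' (\<rho> \<alpha>)" using c_one[OF al xi'A0] by simp
    also have "\<dots> = ktilde E (\<rho> \<alpha>) xi'" by (rule ktilde_sym[OF form A0g[OF xi'A0] A0g[OF rho[OF al]]])
    finally show ?thesis using coef[OF al] by simp
  qed
  define K where "K = kinv E \<phi>"
  have Kso: "K \<in> so E" unfolding K_def using kinv_prop[OF form A0g[OF phi]] by blast
  have t3: "ktilde E \<phi> (adsharp E a (\<rho> \<alpha>)) = \<rho> \<alpha> (ad (matrix_inv a) K)" if al: "\<alpha> \<in> I" for \<alpha>
  proof -
    have "adsharp E a (\<rho> \<alpha>) \<in> gdual E" by (rule adsharp_gdual[OF aSO A0g[OF rho[OF al]]])
    hence "ktilde E \<phi> (adsharp E a (\<rho> \<alpha>)) = adsharp E a (\<rho> \<alpha>) K"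
      unfolding K_def by (rule ktilde_eval[OF form A0g[OF phi]])
    thus ?thesis unfolding adsharp_def using Kso by simp
  qed
  have adK: "ad (matrix_inv a) K \<in> so E" by (rule ad_so[OF aF(3,4) Kso])
  have "(\<Sum>\<alpha>\<in>I. sgn_k E (\<rho> \<alpha>) * kt_fun2 E \<phi> (\<rho> \<alpha>) p * XL_fun (c \<alpha>) p)
      = (\<Sum>\<alpha>\<in>I. ktilde E (\<rho> \<alpha>) (\<rho> \<alpha>) * \<rho> \<alpha> (ad (matrix_inv a) K) * (v \<alpha> * ktilde E (\<rho> \<alpha>) (\<rho> \<alpha>)))"
    unfolding pe sgn_k_def kt_fun2_def XL_fun_def
    by (rule sum.cong[OF refl]) (simp add: t2 t3)
  also have "\<dots> = (\<Sum>\<alpha>\<in>I. v \<alpha> * \<rho> \<alpha> (ad (matrix_inv a) K))"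
  proof (rule sum.cong[OF refl])
    fix \<alpha> assume al: "\<alpha> \<in> I"
    have "ktilde E (\<rho> \<alpha>) (\<rho> \<alpha>) * \<rho> \<alpha> (ad (matrix_inv a) K) * (v \<alpha> * ktilde E (\<rho> \<alpha>) (\<rho> \<alpha>))
        = (ktilde E (\<rho> \<alpha>) (\<rho> \<alpha>) * ktilde E (\<rho> \<alpha>) (\<rho> \<alpha>)) * (v \<alpha> * \<rho> \<alpha> (ad (matrix_inv a) K))"
      by (simp add: algebra_simps)
    thus "ktilde E (\<rho> \<alpha>) (\<rho> \<alpha>) * \<rho> \<alpha> (ad (matrix_inv a) K) * (v \<alpha> * ktilde E (\<rho> \<alpha>) (\<rho> \<alpha>))
        = v \<alpha> * \<rho> \<alpha> (ad (matrix_inv a) K)" using sq[OF al] by simp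
  qed
  also have "\<dots> = xi' (ad (matrix_inv a) K)" using v by simp
  also have "\<dots> = xi (ad a (ad (matrix_inv a) K))" unfolding xi'_def using adK by simp
  also have "\<dots> = xi K" by (simp add: ad_inv_cancel[OF aF(1)])
  also have "\<dots> = ktilde E \<phi> xi" unfolding K_def by (rule ktilde_eval[OF form A0g[OF phi] A0g[OF xi], symmetric])
  also have "\<dots> = kt_fun E \<phi> p" unfolding pe kt_fun_def by simp
  finally show "kt_fun E \<phi> p = (\<Sum>\<alpha>\<in>I. sgn_k E (\<rho> \<alpha>) * kt_fun2 E \<phi> (\<rho> \<alpha>) p * XL_fun (c \<alpha>) p)" by simp
qed

end
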